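(* For every integer $n\ge 2$, the subdivision scheme $S_n$ generates $C^1$ limit functions, i.e. for every bounded initial sequence $\mathbf f^0$ the limit function generated by $S_n$ from $\mathbf f^0$ is continuously differentiable.
   Context: For an integer $n\ge1$, the subdivision scheme $S_n$ acts on real sequences $\mathbf f^k=(f^k_i)_{i\in\mathbb Z}$ (the value $f^k_i$ being associated with the dyadic point $2^{-k}i$), starting from initial data $\mathbf f^0$, by the refinement rules $$f^{k+1}_{2i}=\frac1{2n-1}\sum_{j=-n+1}^{n-1}f^k_{i+j},\qquad f^{k+1}_{2i+1}=\frac1{2n}\sum_{j=-n+1}^{n}f^k_{i+j},\qquad i\in\mathbb Z,\ k\ge0.$$ The scheme is convergent: for every bounded $\mathbf f^0$ there is a continuous $F:\mathbb R\to\mathbb R$ (the limit function) with $\lim_{k\to\infty}\sup_{i}|f^k_i-F(2^{-k}i)|=0$. *)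

theory Defs
  imports "HOL-Analysis.Analysis"
begin

text \<open>One refinement step of the scheme S_n on a bi-infinite real sequence.
  For m = 2i we have m div 2 = i, for m = 2i+1 we have m div 2 = i.\<close>
definition Sn_step :: "nat \<Rightarrow> (int \<Rightarrow> real) \<Rightarrow> (int \<Rightarrow> real)" where
  "Sn_step n f = (\<lambda>m. if even m
      then (\<Sum>j\<in>{- int n + 1 .. int n - 1}. f (m div 2 + j)) / (2 * real n - 1)
      else (\<Sum>j\<in>{- int n + 1 .. int n}. f (m div 2 + j)) / (2 * real n))"

definition Sn_iter :: "nat \<Rightarrow> nat \<Rightarrow> (int \<Rightarrow> real) \<Rightarrow> (int \<Rightarrow> real)" where
  "Sn_iter n k f0 = (Sn_step n ^^ k) f0"

definition is_limit_function :: "nat \<Rightarrow> (int \<Rightarrow> real) \<Rightarrow> (real \<Rightarrow> real) \<Rightarrow> bool" where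
  "is_limit_function n f0 F \<longleftrightarrow> continuous_on UNIV F \<and>
     (\<forall>e>0. \<exists>K. \<forall>k\<ge>K. \<forall>i. \<bar>Sn_iter n k f0 i - F (real_of_int i / 2 ^ k)\<bar> < e)"

end

theory Submission
  imports Defs
begin


lemma coreP: "real N * h N - (\<Sum>t<N. h t) = (\<Sum>t<N. (real t + 1) * (h (Suc t) - h t))"
  by (induction N) (auto simp: algebra_simps)

lemma coreQ: "(\<Sum>t<N. h (Suc t)) - real N * h 0 = (\<Sum>t<N. (real N - real t) * (h (Suc t) - h t))"
proof (induction N)
  case 0 then show ?case by simp
next
  case (Suc N)
  have "(\<Sum>t<Suc N. (real (Suc N) - real t) * (h (Suc t) - h t))
      = (\<Sum>t<Suc N. (real N - real t) * (h (Suc t) - h t) + (h (Suc t) - h t))"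
    by (intro sum.cong) (auto simp: algebra_simps)
  also have "\<dots> = (\<Sum>t<Suc N. (real N - real t) * (h (Suc t) - h t)) + (\<Sum>t<Suc N. (h (Suc t) - h t))"
    by (simp add: sum.distrib)
  also have "(\<Sum>t<Suc N. (h (Suc t) - h t)) = h (Suc N) - h 0"
    by (rule sum_lessThan_telescope)
  also have "(\<Sum>t<Suc N. (real N - real t) * (h (Suc t) - h t)) = (\<Sum>t<N. (real N - real t) * (h (Suc t) - h t))"
    by simp
  finally have X: "(\<Sum>t<Suc N. (real (Suc N) - real t) * (h (Suc t) - h t)) = (\<Sum>t<N. (real N - real t) * (h (Suc t) - h t)) + (h (Suc N) - h 0)" .
  have Y: "(\<Sum>t<Suc N. h (Suc t)) = (\<Sum>t<N. h (Suc t)) + h (Suc N)" by simp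
  have Z: "real (Suc N) * h 0 = real N * h 0 + h 0" by (simp add: algebra_simps)
  show ?case unfolding X Y Z using Suc.IH by linarith
qed

lemma identP:
  assumes "N \<ge> 1"
  shows "(\<Sum>t<Suc N. h t) / (real N + 1) - (\<Sum>t<N. h t) / real N
       = (\<Sum>t<N. (real t + 1) / (real N * (real N + 1)) * (h (Suc t) - h t))"
proof -
  have N: "real N > 0" using assms by simp
  have "(\<Sum>t<N. (real t + 1) / (real N * (real N + 1)) * (h (Suc t) - h t))
     = (\<Sum>t<N. (real t + 1) * (h (Suc t) - h t)) / (real N * (real N + 1))"
    by (simp add: sum_divide_distrib)
  also have "\<dots> = (real N * h N - (\<Sum>t<N. h t)) / (real N * (real N + 1))"
    by (simp add: coreP)
  finally show ?thesis using N
    by (simp add: field_simps)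
qed

lemma identQ:
  assumes "N \<ge> 1"
  shows "(\<Sum>t<N. h (Suc t)) / real N - (\<Sum>t<Suc N. h t) / (real N + 1)
       = (\<Sum>t<N. (real N - real t) / (real N * (real N + 1)) * (h (Suc t) - h t))"
proof -
  have N: "real N > 0" using assms by simp
  have s: "(\<Sum>t<Suc N. h t) = h 0 + (\<Sum>t<N. h (Suc t))"
    by (rule sum.lessThan_Suc_shift)
  have "(\<Sum>t<N. (real N - real t) / (real N * (real N + 1)) * (h (Suc t) - h t))
     = (\<Sum>t<N. (real N - real t) * (h (Suc t) - h t)) / (real N * (real N + 1))"
    by (simp add: sum_divide_distrib)
  also have "\<dots> = ((\<Sum>t<N. h (Suc t)) - real N * h 0) / (real N * (real N + 1))"
    by (simp add: coreQ)
  finally show ?thesis using N unfolding s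
    by (simp add: field_simps)
qed

lemma sum_int_shift:
  fixes g :: "int \<Rightarrow> real"
  shows "(\<Sum>j\<in>{a..b}. g j) = (\<Sum>t<nat (b - a + 1). g (a + int t))"
proof -
  have "{a..b} = (\<lambda>t. a + int t) ` {..<nat (b - a + 1)}"
  proof
    show "{a..b} \<subseteq> (\<lambda>t. a + int t) ` {..<nat (b - a + 1)}"
    proof
      fix j assume "j \<in> {a..b}"
      then have "j = a + int (nat (j - a))" "nat (j - a) < nat (b - a + 1)" by auto
      then show "j \<in> (\<lambda>t. a + int t) ` {..<nat (b - a + 1)}" by blast
    qed
  qed auto
  moreover have "inj_on (\<lambda>t. a + int t) {..<nat (b - a + 1)}" by (auto simp: inj_on_def)
  ultimately show ?thesis by (simp add: sum.reindex)
qed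

definition wt :: "nat \<Rightarrow> int \<Rightarrow> nat \<Rightarrow> real" where
  "wt N m t = 2 * (if even m then real t + 1 else real N - real t) / (real N * (real N + 1))"

lemma step_diff:
  fixes f :: "int \<Rightarrow> real"
  assumes n: "n \<ge> 1"
  shows "Sn_step n f (m + 1) - Sn_step n f m
    = (\<Sum>t<2*n-1. wt (2*n-1) m t / 2 * (f (m div 2 - int n + 1 + int t + 1) - f (m div 2 - int n + 1 + int t)))"
proof -
  define N where "N = 2*n - 1"
  define i where "i = m div 2"
  define h where "h t = f (i - int n + 1 + int t)" for t
  have N1: "N \<ge> 1" using n by (simp add: N_def)
  have RN: "real N = 2 * real n - 1" using n by (simp add: N_def of_nat_diff)
  have SN: "Suc N = 2 * n" using n by (simp add: N_def)
  have natA: "nat (int n - 1 - (- int n + 1) + 1) = N" using n by (simp add: N_def)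
  have natB: "nat (int n - (- int n + 1) + 1) = Suc N" using n by (simp add: SN)
  have sA: "(\<Sum>j\<in>{- int n + 1 .. int n - 1}. f (c + j)) = (\<Sum>t<N. f (c - int n + 1 + int t))" for c
    unfolding sum_int_shift natA by (intro sum.cong) (auto simp: algebra_simps)
  have sB: "(\<Sum>j\<in>{- int n + 1 .. int n}. f (c + j)) = (\<Sum>t<Suc N. f (c - int n + 1 + int t))" for c
    unfolding sum_int_shift natB by (intro sum.cong) (auto simp: algebra_simps)
  have rhs: "(\<Sum>t<N. wt N m t / 2 * (f (i - int n + 1 + int t + 1) - f (i - int n + 1 + int t)))
      = (\<Sum>t<N. (if even m then real t + 1 else real N - real t) / (real N * (real N + 1)) * (h (Suc t) - h t))"
  proof (intro sum.cong refl)
    fix t assume "t \<in> {..<N}"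
    have "f (i - int n + 1 + int t + 1) = h (Suc t)" by (simp add: h_def algebra_simps)
    moreover have "f (i - int n + 1 + int t) = h t" by (simp add: h_def)
    ultimately show "wt N m t / 2 * (f (i - int n + 1 + int t + 1) - f (i - int n + 1 + int t))
      = (if even m then real t + 1 else real N - real t) / (real N * (real N + 1)) * (h (Suc t) - h t)"
      by (simp add: wt_def)
  qed
  have d1: "2 * real n - 1 = real N" using RN by simp
  have d2: "2 * real n = real N + 1" using RN by simp
  show ?thesis
  proof (cases "even m")
    case True
    then have m1: "(m + 1) div 2 = i" "\<not> even (m+1)" by (auto simp: i_def elim!: evenE)
    have "Sn_step n f (m + 1) - Sn_step n f m = (\<Sum>t<Suc N. h t) / (real N + 1) - (\<Sum>t<N. h t) / real N"
    proof -
      have e1: "Sn_step n f m = (\<Sum>j\<in>{- int n + 1 .. int n - 1}. f (i + j)) / (2 * real n - 1)"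
        using True by (simp add: Sn_step_def i_def)
      have e2: "Sn_step n f (m+1) = (\<Sum>j\<in>{- int n + 1 .. int n}. f (i + j)) / (2 * real n)"
        using m1 by (simp add: Sn_step_def)
      show ?thesis unfolding e1 e2 sA sB d2 h_def by simp
    qed
    also have "\<dots> = (\<Sum>t<N. (real t + 1) / (real N * (real N + 1)) * (h (Suc t) - h t))"
      by (rule identP[OF N1])
    finally show ?thesis using True unfolding rhs[unfolded i_def N_def] N_def by simp
  next
    case False
    then have m1: "(m + 1) div 2 = i + 1" "even (m+1)" by (auto simp: i_def elim!: oddE)
    have sh: "(\<Sum>t<N. f (i + 1 - int n + 1 + int t)) = (\<Sum>t<N. h (Suc t))"
      by (intro sum.cong) (auto simp: h_def algebra_simps)
    have "Sn_step n f (m + 1) - Sn_step n f m = (\<Sum>t<N. h (Suc t)) / real N - (\<Sum>t<Suc N. h t) / (real N + 1)"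
    proof -
      have e1: "Sn_step n f m = (\<Sum>j\<in>{- int n + 1 .. int n}. f (i + j)) / (2 * real n)"
        using False by (simp add: Sn_step_def i_def)
      have e2: "Sn_step n f (m+1) = (\<Sum>j\<in>{- int n + 1 .. int n - 1}. f (i + 1 + j)) / (2 * real n - 1)"
        using m1 by (simp add: Sn_step_def)
      show ?thesis unfolding e1 e2 sA sB d2 sh by (simp add: h_def)
    qed
    also have "\<dots> = (\<Sum>t<N. (real N - real t) / (real N * (real N + 1)) * (h (Suc t) - h t))"
      by (rule identQ[OF N1])
    finally show ?thesis using False unfolding rhs[unfolded i_def N_def] N_def by simp
  qed
qed



lemma contr:
  fixes x :: "int \<Rightarrow> real" and w1 w2 :: "nat \<Rightarrow> real"
  assumes w1: "\<And>t. t < N \<Longrightarrow> w1 t \<ge> e" and w2: "\<And>t. t < N \<Longrightarrow> w2 t \<ge> e"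
    and s1: "(\<Sum>t<N. w1 t) = 1" and s2: "(\<Sum>t<N. w2 t) = 1" and e: "e \<ge> 0"
    and c: "\<bar>c1 - c2\<bar> \<le> int N - 1"
    and x: "\<And>t s. t < N \<Longrightarrow> s < N \<Longrightarrow> \<bar>x (c1 + int t) - x (c2 + int s)\<bar> \<le> \<delta>"
  shows "\<bar>(\<Sum>t<N. w1 t * x (c1 + int t)) - (\<Sum>s<N. w2 s * x (c2 + int s))\<bar> \<le> (1 - e^2) * \<delta>"
proof -
  obtain t0 s0 where ts: "t0 < N" "s0 < N" "c1 + int t0 = c2 + int s0"
  proof (cases "c1 \<le> c2")
    case True
    then show ?thesis using that[of "nat (c2 - c1)" 0] c by auto
  next
    case False
    then show ?thesis using that[of 0 "nat (c1 - c2)"] c by auto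
  qed
  have d0: "\<delta> \<ge> 0" using x[OF ts(1,2)] ts(3) by simp
  have w1p: "t < N \<Longrightarrow> w1 t \<ge> 0" for t using w1[of t] e by simp
  have w2p: "t < N \<Longrightarrow> w2 t \<ge> 0" for t using w2[of t] e by simp
  define I where "I t s = (if t = t0 \<and> s = s0 then 0 else \<delta>)" for t s
  have eq: "(\<Sum>t<N. w1 t * x (c1 + int t)) - (\<Sum>s<N. w2 s * x (c2 + int s))
     = (\<Sum>t<N. \<Sum>s<N. w1 t * w2 s * (x (c1 + int t) - x (c2 + int s)))"
  proof -
    have "(\<Sum>t<N. \<Sum>s<N. w1 t * w2 s * (x (c1 + int t) - x (c2 + int s)))
      = (\<Sum>t<N. \<Sum>s<N. w1 t * x (c1 + int t) * w2 s) - (\<Sum>t<N. \<Sum>s<N. w1 t * (w2 s * x (c2 + int s)))"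
      by (simp add: algebra_simps sum_subtractf)
    also have "\<dots> = (\<Sum>t<N. w1 t * x (c1 + int t)) - (\<Sum>s<N. w2 s * x (c2 + int s))"
      by (simp add: sum_distrib_left[symmetric] sum_distrib_right[symmetric] s1 s2)
    finally show ?thesis by simp
  qed
  have "\<bar>\<Sum>t<N. \<Sum>s<N. w1 t * w2 s * (x (c1 + int t) - x (c2 + int s))\<bar>
     \<le> (\<Sum>t<N. \<Sum>s<N. \<bar>w1 t * w2 s * (x (c1 + int t) - x (c2 + int s))\<bar>)"
    by (rule order_trans[OF sum_abs]) (intro sum_mono sum_abs)
  also have "\<dots> \<le> (\<Sum>t<N. \<Sum>s<N. w1 t * w2 s * I t s)"
  proof (intro sum_mono)
    fix t s assume "t \<in> {..<N}" "s \<in> {..<N}"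
    then have "t < N" "s < N" by auto
    then show "\<bar>w1 t * w2 s * (x (c1 + int t) - x (c2 + int s))\<bar> \<le> w1 t * w2 s * I t s"
      using w1p w2p x ts unfolding I_def by (auto simp: abs_mult intro!: mult_left_mono mult_nonneg_nonneg)
  qed
  also have "\<dots> = (\<Sum>t<N. \<Sum>s<N. w1 t * w2 s * \<delta>) - (\<Sum>t<N. \<Sum>s<N. w1 t * w2 s * (if t = t0 \<and> s = s0 then \<delta> else 0))"
    by (simp add: I_def sum_subtractf[symmetric] algebra_simps if_distrib cong: if_cong)
  also have "(\<Sum>t<N. \<Sum>s<N. w1 t * w2 s * \<delta>) = \<delta>"
    by (simp add: sum_distrib_left[symmetric] sum_distrib_right[symmetric] s1 s2)
  also have "(\<Sum>t<N. \<Sum>s<N. w1 t * w2 s * (if t = t0 \<and> s = s0 then \<delta> else 0)) = w1 t0 * w2 s0 * \<delta>"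
  proof -
    have "(\<Sum>t<N. \<Sum>s<N. w1 t * w2 s * (if t = t0 \<and> s = s0 then \<delta> else 0))
        = (\<Sum>t<N. if t = t0 then w1 t * w2 s0 * \<delta> else 0)"
      using ts by (intro sum.cong refl) (auto simp: if_distrib cong: if_cong)
    also have "\<dots> = w1 t0 * w2 s0 * \<delta>" using ts by simp
    finally show ?thesis .
  qed
  also have "\<delta> - w1 t0 * w2 s0 * \<delta> \<le> (1 - e^2) * \<delta>"
  proof -
    have "e^2 \<le> w1 t0 * w2 s0" using w1[OF ts(1)] w2[OF ts(2)] e
      by (simp add: power2_eq_square mult_mono)
    then have "\<delta> * e^2 \<le> \<delta> * (w1 t0 * w2 s0)" using d0 by (simp add: mult_left_mono)
    then show ?thesis by (simp add: algebra_simps)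
  qed
  finally show ?thesis unfolding eq .
qed



lemma sum_tp1: "(\<Sum>t<N. real t + 1) = real N * (real N + 1) / 2"
  by (induction N) (auto simp: field_simps)

lemma sum_Nmt: "(\<Sum>t<N. real N - real t) = real N * (real N + 1) / 2"
proof (induction N)
  case 0 then show ?case by simp
next
  case (Suc N)
  have "(\<Sum>t<Suc N. real (Suc N) - real t) = (\<Sum>t<Suc N. (real N - real t) + 1)"
    by (intro sum.cong) auto
  also have "\<dots> = (\<Sum>t<N. real N - real t) + real (Suc N)" by (simp add: sum.distrib)
  finally show ?case using Suc by (simp add: field_simps)
qed

lemma wt_sum: assumes "N \<ge> 1" shows "(\<Sum>t<N. wt N m t) = 1"
proof -
  have p: "real N * (real N + 1) > 0" using assms by simp
  have "(\<Sum>t<N. wt N m t) = 2 * (\<Sum>t<N. (if even m then real t + 1 else real N - real t)) / (real N * (real N + 1))"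
    unfolding wt_def by (simp add: sum_divide_distrib sum_distrib_left)
  also have "(\<Sum>t<N. (if even m then real t + 1 else real N - real t)) = real N * (real N + 1) / 2"
    by (cases "even m") (simp_all add: sum_tp1 sum_Nmt)
  finally show ?thesis using p assms by simp
qed

lemma wt_ge: assumes "N \<ge> 1" "t < N" shows "wt N m t \<ge> 2 / (real N * (real N + 1))"
proof -
  have p: "real N * (real N + 1) > 0" using assms by simp
  have "1 \<le> (if even m then real t + 1 else real N - real t)" using assms by auto
  then show ?thesis unfolding wt_def using p by (simp add: divide_right_mono)
qed

definition Dk :: "nat \<Rightarrow> (int \<Rightarrow> real) \<Rightarrow> nat \<Rightarrow> int \<Rightarrow> real" where
  "Dk n f0 k i = 2^k * (Sn_iter n k f0 (i+1) - Sn_iter n k f0 i)"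

lemma Sn_iter_Suc: "Sn_iter n (Suc k) f0 = Sn_step n (Sn_iter n k f0)"
  by (simp add: Sn_iter_def)

lemma D_rec:
  assumes "n \<ge> 1"
  shows "Dk n f0 (Suc k) m = (\<Sum>t<2*n-1. wt (2*n-1) m t * Dk n f0 k (m div 2 - int n + 1 + int t))"
proof -
  have "Dk n f0 (Suc k) m = 2 * 2^k * (\<Sum>t<2*n-1. wt (2*n-1) m t / 2 *
     (Sn_iter n k f0 (m div 2 - int n + 1 + int t + 1) - Sn_iter n k f0 (m div 2 - int n + 1 + int t)))"
    unfolding Dk_def Sn_iter_Suc step_diff[OF assms] by simp
  also have "\<dots> = (\<Sum>t<2*n-1. wt (2*n-1) m t * Dk n f0 k (m div 2 - int n + 1 + int t))"
    unfolding Dk_def sum_distrib_left by (intro sum.cong) auto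
  finally show ?thesis .
qed

lemma aux_ts: fixes a b t s N n :: int
  assumes "\<bar>a - b\<bar> \<le> 2 * (n - 1)" "0 \<le> t" "0 \<le> s" "t < N" "s < N" "N = 2 * n - 1"
  shows "\<bar>a - n + 1 + t - (b - n + 1 + s)\<bar> \<le> 4 * n - 4"
  using assms by (simp add: abs_le_iff)

lemma div2_diff: fixes p q :: int assumes "\<bar>p - q\<bar> \<le> 4 * r" shows "\<bar>p div 2 - q div 2\<bar> \<le> 2 * r"
  using assms by linarith



lemma geom_limit:
  fixes a :: "nat \<Rightarrow> real"
  assumes d: "\<And>k. \<bar>a (Suc k) - a k\<bar> \<le> C * q^k" and q: "0 \<le> q" "q < 1"
  shows "\<exists>L. a \<longlonglongrightarrow> L \<and> (\<forall>k. \<bar>L - a k\<bar> \<le> C * q^k / (1 - q))"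
proof -
  define b where "b i = a (Suc i) - a i" for i
  have sg: "summable (\<lambda>i. C * q^i)" using q by (intro summable_mult summable_geometric) simp
  have sb: "summable (\<lambda>i. norm (b i))"
    by (rule summable_comparison_test[OF _ sg]) (use d in \<open>simp add: b_def\<close>)
  then have sb': "summable b" by (rule summable_norm_cancel)
  have tel: "a k = a 0 + (\<Sum>i<k. b i)" for k
    unfolding b_def sum_lessThan_telescope by simp
  have tf: "(\<lambda>k. a 0 + (\<Sum>i<k. b i)) = a" using tel by (intro ext) (rule sym)
  have "(\<lambda>k. a 0 + (\<Sum>i<k. b i)) \<longlonglongrightarrow> a 0 + suminf b"
    by (intro tendsto_add tendsto_const summable_LIMSEQ sb')
  then have "a \<longlonglongrightarrow> a 0 + suminf b" unfolding tf .
  moreover have "\<bar>(a 0 + suminf b) - a k\<bar> \<le> C * q^k / (1 - q)" for k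
  proof -
    have "(a 0 + suminf b) - a k = (\<Sum>i. b (i + k))"
      unfolding tel[of k] suminf_minus_initial_segment[OF sb'] by simp
    also have "\<bar>\<dots>\<bar> \<le> (\<Sum>i. norm (b (i + k)))"
      using summable_norm[of "\<lambda>i. b (i + k)"] summable_ignore_initial_segment[OF sb, of k] by simp
    also have "\<dots> \<le> (\<Sum>i. C * q^k * q^i)"
    proof (rule suminf_le)
      show "summable (\<lambda>i. norm (b (i + k)))" using summable_ignore_initial_segment[OF sb, of k] by simp
      show "summable (\<lambda>i. C * q^k * q^i)" using q by (intro summable_mult summable_geometric) simp
      fix i show "norm (b (i + k)) \<le> C * q^k * q^i" using d[of "i+k"] by (simp add: b_def power_add mult_ac)
    qed
    also have "\<dots> = C * q^k / (1 - q)"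
      using q by (simp add: suminf_mult suminf_geometric)
    finally show ?thesis .
  qed
  ultimately show ?thesis by blast
qed

lemma floor_half: "\<lfloor>2^(Suc k) * x\<rfloor> div 2 = \<lfloor>2^k * (x::real)\<rfloor>"
proof -
  have "\<lfloor>2^(Suc k) * x / real_of_int 2\<rfloor> = \<lfloor>2^(Suc k) * x\<rfloor> div 2"
    by (rule floor_divide_real_eq_div) simp
  then show ?thesis by simp
qed

lemma tele_int:
  fixes f :: "int \<Rightarrow> real"
  assumes "p \<le> q"
  shows "(\<Sum>l\<in>{p..<q}. f (l + 1) - f l) = f q - f p"
proof -
  have "{p..<q} = {p..q-1}" by auto
  then have "(\<Sum>l\<in>{p..<q}. f (l + 1) - f l) = (\<Sum>t<nat (q - p). f (p + int (Suc t)) - f (p + int t))"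
    by (simp add: sum_int_shift add_ac)
  also have "\<dots> = f (p + int (nat (q - p))) - f (p + int 0)"
    by (rule sum_lessThan_telescope)
  finally show ?thesis using assms by simp
qed

lemma half_pow_tendsto: "(\<lambda>k. 1 / (2::real)^k) \<longlonglongrightarrow> 0"
proof -
  have "(\<lambda>k. (1/2::real)^k) \<longlonglongrightarrow> 0" by (rule LIMSEQ_power_zero) simp
  then show ?thesis by (simp add: power_one_over)
qed

lemma floor_scaled_tendsto: "(\<lambda>k. real_of_int \<lfloor>2^k * b\<rfloor> / 2^k) \<longlonglongrightarrow> (b::real)"
proof (rule real_tendsto_sandwich)
  show "\<forall>\<^sub>F k in sequentially. b - 1 / 2^k \<le> real_of_int \<lfloor>2^k * b\<rfloor> / 2^k"
  proof (intro always_eventually allI)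
    fix k :: nat
    have "2^k * b - 1 \<le> real_of_int \<lfloor>2^k * b\<rfloor>" by linarith
    then have "(2^k * b - 1) / 2^k \<le> real_of_int \<lfloor>2^k * b\<rfloor> / 2^k" by (simp add: divide_right_mono)
    then show "b - 1 / 2^k \<le> real_of_int \<lfloor>2^k * b\<rfloor> / 2^k" by (simp add: diff_divide_distrib)
  qed
  show "\<forall>\<^sub>F k in sequentially. real_of_int \<lfloor>2^k * b\<rfloor> / 2^k \<le> b"
  proof (intro always_eventually allI)
    fix k :: nat
    have "real_of_int \<lfloor>2^k * b\<rfloor> \<le> 2^k * b" by linarith
    then show "real_of_int \<lfloor>2^k * b\<rfloor> / 2^k \<le> b" by (simp add: divide_le_eq mult.commute)
  qed
  show "(\<lambda>k. b - 1 / 2^k) \<longlonglongrightarrow> b" using tendsto_diff[OF tendsto_const half_pow_tendsto, of b] by simp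
  show "(\<lambda>k. b) \<longlonglongrightarrow> b" by simp
qed

context
  fixes n :: nat and f0 :: "int \<Rightarrow> real" and B :: real
  assumes n2: "n \<ge> 2" and bnd: "\<And>i. \<bar>f0 i\<bar> \<le> B"
begin

definition "NN = 2*n - 1"
definition "ee = 2 / (real NN * (real NN + 1))"
definition "th = 1 - ee^2"

lemma NN1: "NN \<ge> 1" using n2 by (simp add: NN_def)
lemma NNr: "int NN = 2 * int n - 1" using n2 by (simp add: NN_def)

lemma ee_pos: "ee > 0" and ee_le1: "ee \<le> 1"
proof -
  have a: "real NN \<ge> 1" using NN1 by simp
  then have "real NN * (real NN + 1) \<ge> 1 * 2" by (intro mult_mono) auto
  then show "ee > 0" "ee \<le> 1" unfolding ee_def by auto
qed

lemma th_props: "0 \<le> th" "th < 1"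
proof -
  have "ee^2 \<le> 1" using ee_pos ee_le1 by (simp add: power_le_one)
  moreover have "ee^2 > 0" using ee_pos by simp
  ultimately show "0 \<le> th" "th < 1" unfolding th_def by auto
qed

lemma B0: "B \<ge> 0" using bnd[of 0] by simp

lemma D_osc: "\<bar>p - q\<bar> \<le> 4 * int n - 4 \<Longrightarrow> \<bar>Dk n f0 k p - Dk n f0 k q\<bar> \<le> 4 * B * th^k"
proof (induction k arbitrary: p q)
  case 0
  have "\<bar>Dk n f0 0 p - Dk n f0 0 q\<bar> = \<bar>f0 (p+1) - f0 p - f0 (q+1) + f0 q\<bar>"
    by (simp add: Dk_def Sn_iter_def)
  also have "\<dots> \<le> \<bar>f0 (p+1)\<bar> + \<bar>f0 p\<bar> + \<bar>f0 (q+1)\<bar> + \<bar>f0 q\<bar>" by linarith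
  also have "\<dots> \<le> 4 * B" using bnd[of "p+1"] bnd[of p] bnd[of "q+1"] bnd[of q] by linarith
  finally show ?case by simp
next
  case (Suc k)
  have n1: "n \<ge> 1" using n2 by simp
  define c1 where "c1 = p div 2 - int n + 1"
  define c2 where "c2 = q div 2 - int n + 1"
  have dq: "\<bar>p div 2 - q div 2\<bar> \<le> 2 * (int n - 1)"
    by (rule div2_diff) (use Suc.prems in simp)
  have "\<bar>(\<Sum>t<NN. wt NN p t * Dk n f0 k (c1 + int t)) - (\<Sum>s<NN. wt NN q s * Dk n f0 k (c2 + int s))\<bar>
      \<le> (1 - ee^2) * (4 * B * th^k)"
  proof (rule contr)
    show "\<And>t. t < NN \<Longrightarrow> ee \<le> wt NN p t" "\<And>t. t < NN \<Longrightarrow> ee \<le> wt NN q t"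
      unfolding ee_def using wt_ge NN1 by auto
    show "(\<Sum>t<NN. wt NN p t) = 1" "(\<Sum>t<NN. wt NN q t) = 1" using wt_sum NN1 by auto
    show "0 \<le> ee" using ee_pos by simp
    show "\<bar>c1 - c2\<bar> \<le> int NN - 1" using dq unfolding c1_def c2_def NNr by simp
    fix t s assume "t < NN" "s < NN"
    then have "int t < int NN" "int s < int NN" "int t \<ge> 0" "int s \<ge> 0" by auto
    then have "\<bar>c1 + int t - (c2 + int s)\<bar> \<le> 4 * int n - 4"
      using aux_ts[OF dq] NNr unfolding c1_def c2_def by blast
    then show "\<bar>Dk n f0 k (c1 + int t) - Dk n f0 k (c2 + int s)\<bar> \<le> 4 * B * th ^ k"
      by (rule Suc.IH)
  qed
  then show ?case
    unfolding D_rec[OF n1] c1_def c2_def NN_def[symmetric] th_def by (simp add: algebra_simps)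
qed

lemma D_near: "\<bar>Dk n f0 (Suc k) m - Dk n f0 k (m div 2)\<bar> \<le> 4 * B * th^k"
proof -
  have n1: "n \<ge> 1" using n2 by simp
  have "Dk n f0 (Suc k) m - Dk n f0 k (m div 2)
     = (\<Sum>t<NN. wt NN m t * (Dk n f0 k (m div 2 - int n + 1 + int t) - Dk n f0 k (m div 2)))"
    unfolding D_rec[OF n1] NN_def[symmetric]
    by (simp add: algebra_simps sum_subtractf sum_distrib_right[symmetric] wt_sum[OF NN1])
  also have "\<bar>\<dots>\<bar> \<le> (\<Sum>t<NN. wt NN m t * (4 * B * th^k))"
  proof (rule order_trans[OF sum_abs], intro sum_mono)
    fix t assume t: "t \<in> {..<NN}"
    have w: "wt NN m t \<ge> 0" using wt_ge[OF NN1, of t m] t ee_pos unfolding ee_def[symmetric] by auto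
    have "\<bar>m div 2 - int n + 1 + int t - m div 2\<bar> \<le> 4 * int n - 4" using t NNr n2 by auto
    then have "\<bar>Dk n f0 k (m div 2 - int n + 1 + int t) - Dk n f0 k (m div 2)\<bar> \<le> 4 * B * th^k"
      by (rule D_osc)
    then show "\<bar>wt NN m t * (Dk n f0 k (m div 2 - int n + 1 + int t) - Dk n f0 k (m div 2))\<bar> \<le> wt NN m t * (4 * B * th^k)"
      using w by (simp add: abs_mult mult_left_mono)
  qed
  also have "\<dots> = 4 * B * th^k" by (simp add: sum_distrib_right[symmetric] wt_sum[OF NN1])
  finally show ?thesis .
qed


definition GG :: "real \<Rightarrow> real" where "GG x = lim (\<lambda>k. Dk n f0 k \<lfloor>2^k * x\<rfloor>)"
definition TT :: "nat \<Rightarrow> real" where "TT k = 4 * B * th^k / (1 - th)"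

lemma GG_approx: "\<bar>GG x - Dk n f0 k \<lfloor>2^k * x\<rfloor>\<bar> \<le> TT k"
proof -
  have "\<exists>L. (\<lambda>k. Dk n f0 k \<lfloor>2^k * x\<rfloor>) \<longlonglongrightarrow> L \<and> (\<forall>k. \<bar>L - Dk n f0 k \<lfloor>2^k * x\<rfloor>\<bar> \<le> 4 * B * th^k / (1 - th))"
  proof (rule geom_limit)
    fix k
    show "\<bar>Dk n f0 (Suc k) \<lfloor>2 ^ Suc k * x\<rfloor> - Dk n f0 k \<lfloor>2 ^ k * x\<rfloor>\<bar> \<le> 4 * B * th ^ k"
      using D_near[of k "\<lfloor>2 ^ Suc k * x\<rfloor>"] unfolding floor_half .
  qed (use th_props in auto)
  then obtain L where L: "(\<lambda>k. Dk n f0 k \<lfloor>2^k * x\<rfloor>) \<longlonglongrightarrow> L" "\<And>k. \<bar>L - Dk n f0 k \<lfloor>2^k * x\<rfloor>\<bar> \<le> 4 * B * th^k / (1 - th)"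
    by blast
  have "GG x = L" unfolding GG_def using L(1) by (rule limI)
  then show ?thesis using L(2) unfolding TT_def by simp
qed

lemma GG_grid: "\<bar>GG (real_of_int l / 2^k) - Dk n f0 k l\<bar> \<le> TT k"
  using GG_approx[of "real_of_int l / 2^k" k] by simp

lemma th_pow_tendsto: "(\<lambda>k. th^k) \<longlonglongrightarrow> 0"
  by (rule LIMSEQ_power_zero) (use th_props in simp)

lemma TT_tendsto: "TT \<longlonglongrightarrow> 0"
proof -
  have "(\<lambda>k. 4 * B * th^k / (1 - th)) \<longlonglongrightarrow> 4 * B * 0 / (1 - th)"
    by (intro tendsto_intros th_pow_tendsto) (use th_props in simp)
  then show ?thesis unfolding TT_def[abs_def] by simp
qed

lemma floor_close: fixes u v :: real assumes "\<bar>u - v\<bar> < 1" shows "\<bar>\<lfloor>u\<rfloor> - \<lfloor>v\<rfloor>\<bar> \<le> 1"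
proof -
  have "real_of_int \<lfloor>u\<rfloor> \<le> u" "u < real_of_int \<lfloor>u\<rfloor> + 1" "real_of_int \<lfloor>v\<rfloor> \<le> v" "v < real_of_int \<lfloor>v\<rfloor> + 1" by linarith+
  then have "real_of_int (\<lfloor>u\<rfloor> - \<lfloor>v\<rfloor>) < 2" "real_of_int (\<lfloor>u\<rfloor> - \<lfloor>v\<rfloor>) > -2" using assms unfolding abs_less_iff of_int_diff by linarith+
  then have "\<lfloor>u\<rfloor> - \<lfloor>v\<rfloor> < 2" "\<lfloor>u\<rfloor> - \<lfloor>v\<rfloor> > -2" by linarith+
  then show ?thesis by linarith
qed

lemma GG_cont: "continuous_on UNIV GG"
  unfolding continuous_on_iff
proof (intro ballI allI impI)
  fix x :: real and \<epsilon> :: real assume "\<epsilon> > 0"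
  have "(\<lambda>k. 2 * TT k + 4 * B * th^k) \<longlonglongrightarrow> 2 * 0 + 4 * B * 0"
    by (intro tendsto_intros TT_tendsto th_pow_tendsto)
  then have "\<forall>\<^sub>F k in sequentially. 2 * TT k + 4 * B * th^k < \<epsilon>"
    using \<open>\<epsilon> > 0\<close> by (intro order_tendstoD(2)) auto
  then obtain k where k: "2 * TT k + 4 * B * th^k < \<epsilon>" by (meson eventually_sequentially order.refl)
  show "\<exists>\<delta>>0. \<forall>x'\<in>UNIV. dist x' x < \<delta> \<longrightarrow> dist (GG x') (GG x) < \<epsilon>"
  proof (intro exI conjI ballI impI)
    show "(1 / 2^k :: real) > 0" by simp
    fix x' :: real assume "dist x' x < 1 / 2^k"
    then have "\<bar>x' - x\<bar> * 2^k < 1"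
      by (simp add: dist_real_def field_simps)
    moreover have "2^k * x' - 2^k * x = (x' - x) * 2^k" by (simp add: algebra_simps)
    then have "\<bar>2^k * x' - 2^k * x\<bar> = \<bar>x' - x\<bar> * 2^k" by (simp add: abs_mult)
    ultimately have "\<bar>2^k * x' - 2^k * x\<bar> < 1" by simp
    then have "\<bar>\<lfloor>2^k * x'\<rfloor> - \<lfloor>2^k * x\<rfloor>\<bar> \<le> 1" by (rule floor_close)
    then have "\<bar>\<lfloor>2^k * x'\<rfloor> - \<lfloor>2^k * x\<rfloor>\<bar> \<le> 4 * int n - 4" using n2 by linarith
    then have d: "\<bar>Dk n f0 k \<lfloor>2^k * x'\<rfloor> - Dk n f0 k \<lfloor>2^k * x\<rfloor>\<bar> \<le> 4 * B * th^k" by (rule D_osc)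
    have "\<bar>GG x' - GG x\<bar> \<le> 2 * TT k + 4 * B * th^k"
      using GG_approx[of x' k] GG_approx[of x k] d by linarith
    then show "dist (GG x') (GG x) < \<epsilon>" using k by (simp add: dist_real_def)
  qed
qed

lemma grid_conv:
  assumes lf: "is_limit_function n f0 F"
  shows "(\<lambda>k. Sn_iter n k f0 (r k) - F (real_of_int (r k) / 2^k)) \<longlonglongrightarrow> 0"
proof (rule LIMSEQ_I)
  fix e :: real assume "e > 0"
  then obtain K where "\<forall>k\<ge>K. \<forall>i. \<bar>Sn_iter n k f0 i - F (real_of_int i / 2 ^ k)\<bar> < e"
    using lf unfolding is_limit_function_def by blast
  then show "\<exists>no. \<forall>k\<ge>no. norm (Sn_iter n k f0 (r k) - F (real_of_int (r k) / 2^k) - 0) < e" by auto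
qed

lemma val_conv:
  assumes lf: "is_limit_function n f0 F"
  shows "(\<lambda>k. Sn_iter n k f0 \<lfloor>2^k * b\<rfloor>) \<longlonglongrightarrow> F b"
proof -
  have c: "isCont F b" using lf unfolding is_limit_function_def
    by (simp add: continuous_on_eq_continuous_at)
  have "(\<lambda>k. (Sn_iter n k f0 \<lfloor>2^k * b\<rfloor> - F (real_of_int \<lfloor>2^k * b\<rfloor> / 2^k)) + F (real_of_int \<lfloor>2^k * b\<rfloor> / 2^k)) \<longlonglongrightarrow> 0 + F b"
    by (intro tendsto_add grid_conv[OF lf] isCont_tendsto_compose[OF c] floor_scaled_tendsto)
  then show ?thesis by simp
qed

lemma incr_bound:
  assumes lf: "is_limit_function n f0 F" and ab: "a \<le> b" and eta: "\<eta> > 0"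
    and gb: "\<And>t. a - \<eta> < t \<Longrightarrow> t \<le> b \<Longrightarrow> \<bar>GG t - g\<bar> \<le> e"
  shows "\<bar>F b - F a - g * (b - a)\<bar> \<le> e * (b - a)"
proof -
  define p where "p k = \<lfloor>2^k * a\<rfloor>" for k :: nat
  define q where "q k = \<lfloor>2^k * b\<rfloor>" for k :: nat
  define f where "f k = Sn_iter n k f0" for k
  define X where "X k = f k (q k) - f k (p k)" for k
  define Y where "Y k = real_of_int (q k - p k) / 2^k" for k :: nat
  have pq: "p k \<le> q k" for k unfolding p_def q_def by (intro floor_mono mult_left_mono ab) simp
  have S_eq: "X k = (\<Sum>l\<in>{p k..<q k}. Dk n f0 k l) / 2^k" for k
  proof -
    have "X k = (\<Sum>l\<in>{p k..<q k}. f k (l + 1) - f k l)" unfolding X_def by (rule tele_int[OF pq, symmetric])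
    also have "\<dots> = (\<Sum>l\<in>{p k..<q k}. Dk n f0 k l / 2^k)" by (intro sum.cong) (auto simp: Dk_def f_def)
    finally show ?thesis by (simp add: sum_divide_distrib)
  qed
  have "\<forall>\<^sub>F k in sequentially. 1 / 2^k < \<eta>"
    using half_pow_tendsto eta by (intro order_tendstoD(2)) auto
  then have ev: "\<forall>\<^sub>F k in sequentially. \<bar>X k - g * Y k\<bar> \<le> Y k * (TT k + e)"
  proof (rule eventually_mono)
    fix k :: nat assume k: "1 / 2^k < \<eta>"
    have pos: "(2::real)^k > 0" by simp
    have card: "real (card {p k..<q k}) = real_of_int (q k - p k)" using pq[of k] by simp
    have cn: "real (nat (q k - p k)) = real_of_int (q k - p k)" using pq[of k] by simp
    have "X k - g * Y k = (\<Sum>l\<in>{p k..<q k}. Dk n f0 k l - g) / 2^k"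
      unfolding S_eq Y_def sum_subtractf by (simp add: cn diff_divide_distrib add_divide_distrib algebra_simps)
    also have "\<bar>\<dots>\<bar> \<le> (\<Sum>l\<in>{p k..<q k}. TT k + e) / 2^k"
    proof -
      have "\<bar>\<Sum>l\<in>{p k..<q k}. Dk n f0 k l - g\<bar> \<le> (\<Sum>l\<in>{p k..<q k}. TT k + e)"
      proof (rule order_trans[OF sum_abs], intro sum_mono)
        fix l assume l: "l \<in> {p k..<q k}"
        define t where "t = real_of_int l / 2^k"
        have "real_of_int l \<ge> real_of_int (p k)" "real_of_int l + 1 \<le> real_of_int (q k)" using l by auto
        moreover have "2^k * a < real_of_int (p k) + 1" "real_of_int (q k) \<le> 2^k * b" unfolding p_def q_def by linarith+
        ultimately have "2^k * (a - 1 / 2^k) < real_of_int l" "real_of_int l < 2^k * b"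
          by (auto simp: algebra_simps)
        then have "a - 1 / 2^k < t" "t < b" unfolding t_def using pos by (auto simp: field_simps)
        then have "\<bar>GG t - g\<bar> \<le> e" using k by (intro gb) auto
        moreover have "\<bar>GG t - Dk n f0 k l\<bar> \<le> TT k" unfolding t_def by (rule GG_grid)
        ultimately show "\<bar>Dk n f0 k l - g\<bar> \<le> TT k + e" by linarith
      qed
      then show ?thesis using pos by (simp add: divide_right_mono)
    qed
    also have "\<dots> = Y k * (TT k + e)" using card unfolding Y_def by simp
    finally show "\<bar>X k - g * Y k\<bar> \<le> Y k * (TT k + e)" by simp
  qed
  have LX: "X \<longlonglongrightarrow> F b - F a"
    unfolding X_def[abs_def] f_def p_def q_def by (intro tendsto_diff val_conv[OF lf])
  have LY: "Y \<longlonglongrightarrow> b - a"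
  proof -
    have "(\<lambda>k. real_of_int \<lfloor>2^k * b\<rfloor> / 2^k - real_of_int \<lfloor>2^k * a\<rfloor> / 2^k) \<longlonglongrightarrow> b - a"
      by (intro tendsto_diff floor_scaled_tendsto)
    then show ?thesis unfolding Y_def[abs_def] p_def q_def by (simp add: diff_divide_distrib)
  qed
  have "(\<lambda>k. \<bar>X k - g * Y k\<bar>) \<longlonglongrightarrow> \<bar>F b - F a - g * (b - a)\<bar>"
    by (intro tendsto_intros LX LY)
  moreover have "(\<lambda>k. Y k * (TT k + e)) \<longlonglongrightarrow> (b - a) * (0 + e)"
    by (intro tendsto_intros LY TT_tendsto)
  ultimately have "\<bar>F b - F a - g * (b - a)\<bar> \<le> (b - a) * (0 + e)"
    using ev by (intro tendsto_le[OF sequentially_bot]) auto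
  then show ?thesis by (simp add: mult.commute)
qed

lemma F_deriv:
  assumes lf: "is_limit_function n f0 F"
  shows "(F has_real_derivative GG x) (at x)"
  unfolding DERIV_def LIM_eq
proof (intro allI impI)
  fix r :: real assume r: "r > 0"
  obtain \<delta> where d: "\<delta> > 0" "\<And>t. dist t x < \<delta> \<Longrightarrow> dist (GG t) (GG x) < r / 2"
    using GG_cont r unfolding continuous_on_iff by (metis UNIV_I half_gt_zero)
  have gb: "\<bar>GG t - GG x\<bar> \<le> r / 2" if "\<bar>t - x\<bar> < \<delta>" for t
    using d(2)[of t] that by (simp add: dist_real_def)
  show "\<exists>s>0. \<forall>h. h \<noteq> 0 \<and> norm (h - 0) < s \<longrightarrow> norm ((F (x + h) - F x) / h - GG x) < r"
  proof (intro exI conjI allI impI)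
    show "\<delta> / 2 > 0" using d by simp
    fix h :: real assume h: "h \<noteq> 0 \<and> norm (h - 0) < \<delta> / 2"
    have main: "\<bar>F (x + h) - F x - GG x * h\<bar> \<le> r / 2 * \<bar>h\<bar>"
    proof (cases "h > 0")
      case True
      have gb1: "\<And>t. x - \<delta>/2 < t \<Longrightarrow> t \<le> x + h \<Longrightarrow> \<bar>GG t - GG x\<bar> \<le> r/2"
        using True h by (intro gb) (auto simp: abs_less_iff)
      have "\<bar>F (x + h) - F x - GG x * (x + h - x)\<bar> \<le> r / 2 * (x + h - x)"
        by (rule incr_bound[OF lf _ _ gb1]) (use True d in auto)
      then show ?thesis using True by simp
    next
      case False
      then have hn: "h < 0" using h by auto
      have gb1: "\<And>t. x + h - \<delta>/2 < t \<Longrightarrow> t \<le> x \<Longrightarrow> \<bar>GG t - GG x\<bar> \<le> r/2"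
        using hn h by (intro gb) (auto simp: abs_less_iff)
      have "\<bar>F x - F (x + h) - GG x * (x - (x + h))\<bar> \<le> r / 2 * (x - (x + h))"
        by (rule incr_bound[OF lf _ _ gb1]) (use hn d in auto)
      then show ?thesis using hn by (simp add: abs_minus_commute algebra_simps)
    qed
    have "\<bar>(F (x + h) - F x) / h - GG x\<bar> = \<bar>F (x + h) - F x - GG x * h\<bar> / \<bar>h\<bar>"
      using h by (simp add: field_simps abs_divide flip: abs_mult)
    also have "\<dots> \<le> r / 2" using main h by (simp add: divide_le_eq)
    also have "\<dots> < r" using r by simp
    finally show "norm ((F (x + h) - F x) / h - GG x) < r" by simp
  qed
qed

lemma F_C1:
  assumes lf: "is_limit_function n f0 F"
  shows "F C1_differentiable_on UNIV"
  unfolding C1_differentiable_on_def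
  using F_deriv[OF lf] GG_cont
  by (auto simp: has_real_derivative_iff_has_vector_derivative)

end

theorem theorem2:
  fixes n :: nat and f0 :: "int \<Rightarrow> real" and F :: "real \<Rightarrow> real"
  assumes "n \<ge> 2"
    and "bounded (range f0)"
    and "is_limit_function n f0 F"
  shows "F C1_differentiable_on UNIV"
proof -
  obtain B where B: "\<forall>x\<in>range f0. norm x \<le> B" using assms(2) unfolding bounded_iff by blast
  have "\<And>i. \<bar>f0 i\<bar> \<le> B" using B by auto
  then show ?thesis using F_C1[OF assms(1)] assms(3) by blast
qed

end
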